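(* Let $X$ be a connected cubic graph and let $G\leq\mathrm{Aut}\,X$ be an $s$-regular group of automorphisms with $s\in\{1,4\}$. Then every connected $G$-split $2$-cover of $X$ is the canonical double cover of $X$.
   Context: Graphs are finite and simple; maps are composed on the right. An $s$-arc is a sequence $(v_0,\dots,v_s)$ of vertices with $v_{i-1}\sim v_i$ and $v_{i-1}\neq v_{i+1}$; $G$ is $s$-regular if it acts regularly on the set of $s$-arcs. A regular covering projection $\wp\colon\tilde X\to X$ is a surjective graph homomorphism, locally bijective on neighbourhoods, whose group $\mathrm{CT}(\wp)$ of covering transformations (automorphisms $c$ of $\tilde X$ with $c\wp=\wp$) acts regularly on fibres; a $2$-cover has $\mathrm{CT}(\wp)\cong\mathbb{Z}_2$. A lift of $g\in\mathrm{Aut}\,X$ is $\tilde g\in\mathrm{Aut}\,\tilde X$ with $\wp g=\tilde g\wp$; $\wp$ is a $G$-split $2$-cover if every element of $G$ lifts and $\mathrm{CT}(\wp)$ has a complement in the lifted group $\tilde G$ (the group of all lifts). The canonical double cover of $X$ is the projection $(u,i)\mapsto u$ from the graph on $V(X)\times\mathbb{Z}_2$ with $(u,i)\sim(v,i+1)$ whenever $u\sim v$ (up to isomorphism of covering projections). *)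

theory Defs
  imports "HOL-Algebra.Bij" "HOL-Algebra.Coset"
begin

definition simple_graph :: "'a set \<Rightarrow> ('a \<Rightarrow> 'a \<Rightarrow> bool) \<Rightarrow> bool" where
  "simple_graph V E \<longleftrightarrow> finite V \<and> (\<forall>u v. E u v \<longrightarrow> u \<in> V \<and> v \<in> V)
     \<and> (\<forall>u v. E u v \<longrightarrow> E v u) \<and> (\<forall>u. \<not> E u u)"

definition cubic :: "'a set \<Rightarrow> ('a \<Rightarrow> 'a \<Rightarrow> bool) \<Rightarrow> bool" where
  "cubic V E \<longleftrightarrow> (\<forall>u\<in>V. card {v. E u v} = 3)"

definition graph_connected :: "'a set \<Rightarrow> ('a \<Rightarrow> 'a \<Rightarrow> bool) \<Rightarrow> bool" where
  "graph_connected V E \<longleftrightarrow> V \<noteq> {} \<and> (\<forall>u\<in>V. \<forall>v\<in>V. E\<^sup>*\<^sup>* u v)"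

definition graph_aut :: "'a set \<Rightarrow> ('a \<Rightarrow> 'a \<Rightarrow> bool) \<Rightarrow> ('a \<Rightarrow> 'a) set" where
  "graph_aut V E = {g \<in> Bij V. \<forall>u\<in>V. \<forall>v\<in>V. E u v \<longleftrightarrow> E (g u) (g v)}"

definition s_arcs :: "'a set \<Rightarrow> ('a \<Rightarrow> 'a \<Rightarrow> bool) \<Rightarrow> nat \<Rightarrow> 'a list set" where
  "s_arcs V E s = {xs. length xs = Suc s \<and> set xs \<subseteq> V
      \<and> (\<forall>i<s. E (xs ! i) (xs ! Suc i))
      \<and> (\<forall>i. Suc i < s \<longrightarrow> xs ! i \<noteq> xs ! Suc (Suc i))}"

definition s_regular :: "'a set \<Rightarrow> ('a \<Rightarrow> 'a \<Rightarrow> bool) \<Rightarrow> ('a \<Rightarrow> 'a) set \<Rightarrow> nat \<Rightarrow> bool" where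
  "s_regular V E G s \<longleftrightarrow>
     (\<forall>\<alpha>\<in>s_arcs V E s. \<forall>\<beta>\<in>s_arcs V E s. \<exists>!g. g \<in> G \<and> map g \<alpha> = \<beta>)"

definition covering_projection ::
  "'b set \<Rightarrow> ('b \<Rightarrow> 'b \<Rightarrow> bool) \<Rightarrow> 'a set \<Rightarrow> ('a \<Rightarrow> 'a \<Rightarrow> bool) \<Rightarrow> ('b \<Rightarrow> 'a) \<Rightarrow> bool" where
  "covering_projection Vt Et V E p \<longleftrightarrow> p ` Vt = V
     \<and> (\<forall>x y. Et x y \<longrightarrow> E (p x) (p y))
     \<and> (\<forall>x\<in>Vt. bij_betw p {y. Et x y} {v. E (p x) v})"

definition covering_transformations ::
  "'b set \<Rightarrow> ('b \<Rightarrow> 'b \<Rightarrow> bool) \<Rightarrow> ('b \<Rightarrow> 'a) \<Rightarrow> ('b \<Rightarrow> 'b) set" where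
  "covering_transformations Vt Et p = {c \<in> graph_aut Vt Et. \<forall>x\<in>Vt. p (c x) = p x}"

definition regular_covering ::
  "'b set \<Rightarrow> ('b \<Rightarrow> 'b \<Rightarrow> bool) \<Rightarrow> 'a set \<Rightarrow> ('a \<Rightarrow> 'a \<Rightarrow> bool) \<Rightarrow> ('b \<Rightarrow> 'a) \<Rightarrow> bool" where
  "regular_covering Vt Et V E p \<longleftrightarrow> covering_projection Vt Et V E p
     \<and> (\<forall>x\<in>Vt. \<forall>y\<in>Vt. p x = p y \<longrightarrow>
          (\<exists>!c. c \<in> covering_transformations Vt Et p \<and> c x = y))"

definition two_cover ::
  "'b set \<Rightarrow> ('b \<Rightarrow> 'b \<Rightarrow> bool) \<Rightarrow> 'a set \<Rightarrow> ('a \<Rightarrow> 'a \<Rightarrow> bool) \<Rightarrow> ('b \<Rightarrow> 'a) \<Rightarrow> bool" where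
  "two_cover Vt Et V E p \<longleftrightarrow> regular_covering Vt Et V E p
     \<and> card (covering_transformations Vt Et p) = 2"

definition is_lift ::
  "'b set \<Rightarrow> ('b \<Rightarrow> 'b \<Rightarrow> bool) \<Rightarrow> ('b \<Rightarrow> 'a) \<Rightarrow> ('a \<Rightarrow> 'a) \<Rightarrow> ('b \<Rightarrow> 'b) \<Rightarrow> bool" where
  "is_lift Vt Et p g gt \<longleftrightarrow> gt \<in> graph_aut Vt Et \<and> (\<forall>x\<in>Vt. p (gt x) = g (p x))"

definition lifted_group ::
  "'b set \<Rightarrow> ('b \<Rightarrow> 'b \<Rightarrow> bool) \<Rightarrow> ('b \<Rightarrow> 'a) \<Rightarrow> ('a \<Rightarrow> 'a) set \<Rightarrow> ('b \<Rightarrow> 'b) set" where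
  "lifted_group Vt Et p G = {gt. \<exists>g\<in>G. is_lift Vt Et p g gt}"

definition G_split_two_cover ::
  "'a set \<Rightarrow> ('a \<Rightarrow> 'a \<Rightarrow> bool) \<Rightarrow> ('a \<Rightarrow> 'a) set \<Rightarrow> 'b set \<Rightarrow> ('b \<Rightarrow> 'b \<Rightarrow> bool) \<Rightarrow> ('b \<Rightarrow> 'a) \<Rightarrow> bool" where
  "G_split_two_cover V E G Vt Et p \<longleftrightarrow> two_cover Vt Et V E p
     \<and> (\<forall>g\<in>G. \<exists>gt. is_lift Vt Et p g gt)
     \<and> (\<exists>H. subgroup H (BijGroup Vt) \<and> H \<subseteq> lifted_group Vt Et p G
          \<and> H \<inter> covering_transformations Vt Et p = {\<one>\<^bsub>BijGroup Vt\<^esub>}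
          \<and> H <#>\<^bsub>BijGroup Vt\<^esub> covering_transformations Vt Et p = lifted_group Vt Et p G)"

text \<open>Canonical double cover: graph on V x Z_2 (Z_2 rendered as bool),
  (u,i) ~ (v,i+1) iff u ~ v; projection is fst.\<close>
definition cdc_edge :: "('a \<Rightarrow> 'a \<Rightarrow> bool) \<Rightarrow> 'a \<times> bool \<Rightarrow> 'a \<times> bool \<Rightarrow> bool" where
  "cdc_edge E x y \<longleftrightarrow> E (fst x) (fst y) \<and> snd y = (\<not> snd x)"

definition is_canonical_double_cover ::
  "'a set \<Rightarrow> ('a \<Rightarrow> 'a \<Rightarrow> bool) \<Rightarrow> 'b set \<Rightarrow> ('b \<Rightarrow> 'b \<Rightarrow> bool) \<Rightarrow> ('b \<Rightarrow> 'a) \<Rightarrow> bool" where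
  "is_canonical_double_cover V E Vt Et p \<longleftrightarrow>
     (\<exists>\<phi>. bij_betw \<phi> Vt (V \<times> (UNIV :: bool set))
        \<and> (\<forall>x\<in>Vt. \<forall>y\<in>Vt. Et x y \<longleftrightarrow> cdc_edge E (\<phi> x) (\<phi> y))
        \<and> (\<forall>x\<in>Vt. fst (\<phi> x) = p x))"

end

theory Submission
  imports Defs
begin


lemma BG_mult: "g \<in> Bij S \<Longrightarrow> f \<in> Bij S \<Longrightarrow> x \<in> S \<Longrightarrow> (g \<otimes>\<^bsub>BijGroup S\<^esub> f) x = g (f x)"
  by (simp add: BijGroup_def compose_def)
lemma BG_one: "x \<in> S \<Longrightarrow> \<one>\<^bsub>BijGroup S\<^esub> x = x"
  by (simp add: BijGroup_def)
lemma BG_carrier: "carrier (BijGroup S) = Bij S" by (simp add: BijGroup_def)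
lemma Bij_in: "g \<in> Bij S \<Longrightarrow> x \<in> S \<Longrightarrow> g x \<in> S"
  by (auto simp: Bij_def bij_betw_def)
lemma Bij_inj: "g \<in> Bij S \<Longrightarrow> x \<in> S \<Longrightarrow> y \<in> S \<Longrightarrow> g x = g y \<Longrightarrow> x = y"
  by (auto simp: Bij_def bij_betw_def inj_on_def)
lemma Bij_surj: assumes "g \<in> Bij S" "y \<in> S" shows "\<exists>x\<in>S. g x = y"
proof -
  have "g ` S = S" using assms(1) by (simp add: Bij_def bij_betw_def)
  then have "y \<in> g ` S" using assms(2) by simp
  then show ?thesis by auto
qed
lemma Bij_ext: "f \<in> Bij S \<Longrightarrow> g \<in> Bij S \<Longrightarrow> (\<And>x. x \<in> S \<Longrightarrow> f x = g x) \<Longrightarrow> f = g"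
  by (auto simp: Bij_def intro: extensionalityI)
lemma BG_inv1: assumes "g \<in> Bij S" "x \<in> S" shows "g ((inv\<^bsub>BijGroup S\<^esub> g) x) = x"
proof -
  interpret group "BijGroup S" by (rule group_BijGroup)
  have i: "inv\<^bsub>BijGroup S\<^esub> g \<in> Bij S" using assms inv_closed by (simp add: BG_carrier)
  have "(g \<otimes>\<^bsub>BijGroup S\<^esub> inv\<^bsub>BijGroup S\<^esub> g) x = x" using assms r_inv BG_one by (simp add: BG_carrier)
  thus ?thesis using BG_mult[OF assms(1) i assms(2)] by simp
qed
lemma BG_inv2: assumes "g \<in> Bij S" "x \<in> S" shows "(inv\<^bsub>BijGroup S\<^esub> g) (g x) = x"
proof -
  interpret group "BijGroup S" by (rule group_BijGroup)
  have i: "inv\<^bsub>BijGroup S\<^esub> g \<in> Bij S" using assms inv_closed by (simp add: BG_carrier)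
  have "(inv\<^bsub>BijGroup S\<^esub> g \<otimes>\<^bsub>BijGroup S\<^esub> g) x = x" using assms l_inv BG_one by (simp add: BG_carrier)
  thus ?thesis using BG_mult[OF i assms(1) assms(2)] by simp
qed

lemma card3: assumes "card S = 3" "w \<in> S"
  shows "\<exists>a a'. S = {w,a,a'} \<and> a \<noteq> a' \<and> a \<noteq> w \<and> a' \<noteq> w"
proof -
  have "card (S - {w}) = 2" using assms by simp
  then obtain a a' where "S - {w} = {a,a'}" "a \<noteq> a'" by (auto simp: card_2_iff)
  moreover have "S = insert w (S - {w})" using assms(2) by blast
  moreover have "a \<noteq> w" "a' \<noteq> w" using calculation(1) by auto
  ultimately show ?thesis by (intro exI[of _ a] exI[of _ a']) simp
qed

lemma all4: "(\<forall>i<4::nat. P i) = (P 0 \<and> P 1 \<and> P 2 \<and> P 3)"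
proof
  assume "P 0 \<and> P 1 \<and> P 2 \<and> P 3"
  then show "\<forall>i<4::nat. P i" by (auto simp: less_Suc_eq numeral_eq_Suc)
qed auto
lemma all4b: "(\<forall>i::nat. Suc i < 4 \<longrightarrow> P i) = (P 0 \<and> P 1 \<and> P 2)"
proof
  assume "P 0 \<and> P 1 \<and> P 2"
  then show "\<forall>i::nat. Suc i < 4 \<longrightarrow> P i" by (auto simp: less_Suc_eq numeral_eq_Suc)
qed auto
lemma arc4: "[a,b,c,d,e] \<in> s_arcs V E 4 \<longleftrightarrow> {a,b,c,d,e} \<subseteq> V \<and> E a b \<and> E b c \<and> E c d \<and> E d e \<and> a \<noteq> c \<and> b \<noteq> d \<and> c \<noteq> e"
  unfolding s_arcs_def all4 all4b by (simp add: numeral_eq_Suc)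
lemma arc1: "[a,b] \<in> s_arcs V E 1 \<longleftrightarrow> {a,b} \<subseteq> V \<and> E a b"
  by (simp add: s_arcs_def)


locale cov =
  fixes V :: "'a set" and E :: "'a \<Rightarrow> 'a \<Rightarrow> bool" and G :: "('a \<Rightarrow> 'a) set" and s :: nat
    and Vt :: "'b set" and Et :: "'b \<Rightarrow> 'b \<Rightarrow> bool" and p :: "'b \<Rightarrow> 'a"
    and H :: "('b \<Rightarrow> 'b) set" and c :: "'b \<Rightarrow> 'b"
  assumes sgV: "simple_graph V E" and cub: "cubic V E"
    and subG: "subgroup G (BijGroup V)" and Gaut: "G \<subseteq> graph_aut V E"
    and s14: "s \<in> {1,4}" and sreg: "s_regular V E G s"
    and sgT: "simple_graph Vt Et" and conT: "graph_connected Vt Et"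
    and cov: "covering_projection Vt Et V E p"
    and c_in: "\<And>x. x \<in> Vt \<Longrightarrow> c x \<in> Vt"
    and c_p: "\<And>x. x \<in> Vt \<Longrightarrow> p (c x) = p x"
    and c_ne: "\<And>x. x \<in> Vt \<Longrightarrow> c x \<noteq> x"
    and fib: "\<And>x y. x \<in> Vt \<Longrightarrow> y \<in> Vt \<Longrightarrow> p y = p x \<Longrightarrow> y = x \<or> y = c x"
    and c_edge: "\<And>x y. Et x y \<Longrightarrow> Et (c x) (c y)"
    and subH: "subgroup H (BijGroup Vt)"
    and Hlift: "H \<subseteq> lifted_group Vt Et p G"
    and Hct: "H \<inter> covering_transformations Vt Et p = {\<one>\<^bsub>BijGroup Vt\<^esub>}"
    and lifts: "\<And>g. g \<in> G \<Longrightarrow> \<exists>h\<in>H. is_lift Vt Et p g h"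
begin

abbreviation "mulG g f \<equiv> g \<otimes>\<^bsub>BijGroup V\<^esub> f"
abbreviation "oneG \<equiv> \<one>\<^bsub>BijGroup V\<^esub>"
abbreviation "invG g \<equiv> inv\<^bsub>BijGroup V\<^esub> g"
abbreviation "mulH g f \<equiv> g \<otimes>\<^bsub>BijGroup Vt\<^esub> f"
abbreviation "oneH \<equiv> \<one>\<^bsub>BijGroup Vt\<^esub>"
abbreviation "invH g \<equiv> inv\<^bsub>BijGroup Vt\<^esub> g"

lemma E_V: "E u v \<Longrightarrow> u \<in> V \<and> v \<in> V" using sgV by (simp add: simple_graph_def)
lemma E_sym: "E u v \<Longrightarrow> E v u" using sgV by (simp add: simple_graph_def)
lemma E_irr: "\<not> E u u" using sgV by (simp add: simple_graph_def)
lemma Et_V: "Et u v \<Longrightarrow> u \<in> Vt \<and> v \<in> Vt" using sgT by (simp add: simple_graph_def)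
lemma Et_sym: "Et u v \<Longrightarrow> Et v u" using sgT by (simp add: simple_graph_def)
lemma p_V: "x \<in> Vt \<Longrightarrow> p x \<in> V" using cov by (auto simp: covering_projection_def)
lemma p_surj: "v \<in> V \<Longrightarrow> \<exists>x\<in>Vt. p x = v" using cov by (auto simp: covering_projection_def)
lemma p_edge: "Et x y \<Longrightarrow> E (p x) (p y)" using cov by (simp add: covering_projection_def)
lemma p_inj_nb: assumes "Et x y" "Et x y'" "p y = p y'" shows "y = y'"
proof -
  have "x \<in> Vt" using assms Et_V by blast
  then have "inj_on p {y. Et x y}" using cov by (simp add: covering_projection_def bij_betw_def)
  then show ?thesis using assms by (auto dest: inj_onD)
qed
lemma p_lift_nb: assumes "x \<in> Vt" "E (p x) w" shows "\<exists>y. Et x y \<and> p y = w"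
proof -
  have "p ` {y. Et x y} = {v. E (p x) v}" using cov assms(1) by (simp add: covering_projection_def bij_betw_def)
  then show ?thesis using assms(2) by (metis (mono_tags, lifting) imageE mem_Collect_eq)
qed
lemma cc: assumes "x \<in> Vt" shows "c (c x) = x"
proof -
  have "p (c (c x)) = p x" using c_p assms c_in by simp
  then have "c (c x) = x \<or> c (c x) = c x" using fib[OF assms c_in[OF c_in[OF assms]]] by simp
  then show ?thesis using c_ne[OF c_in[OF assms]] by auto
qed

lemma G_Bij: "g \<in> G \<Longrightarrow> g \<in> Bij V" using subgroup.subset[OF subG] by (auto simp: BG_carrier)
lemma G_in: "g \<in> G \<Longrightarrow> x \<in> V \<Longrightarrow> g x \<in> V" by (rule Bij_in[OF G_Bij])
lemma G_inj: "g \<in> G \<Longrightarrow> x \<in> V \<Longrightarrow> y \<in> V \<Longrightarrow> g x = g y \<Longrightarrow> x = y" by (rule Bij_inj[OF G_Bij])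
lemma G_E_iff: "g \<in> G \<Longrightarrow> u \<in> V \<Longrightarrow> w \<in> V \<Longrightarrow> E (g u) (g w) \<longleftrightarrow> E u w"
  using Gaut by (auto simp: graph_aut_def)
lemma G_E: "g \<in> G \<Longrightarrow> E u w \<Longrightarrow> E (g u) (g w)" using G_E_iff E_V by blast
lemma G_one: "oneG \<in> G" using subgroup.one_closed[OF subG] .
lemma G_mul: "g \<in> G \<Longrightarrow> f \<in> G \<Longrightarrow> mulG g f \<in> G" using subgroup.m_closed[OF subG] .
lemma G_inv: "g \<in> G \<Longrightarrow> invG g \<in> G" using subgroup.m_inv_closed[OF subG] .
lemma G_mul_app: "g \<in> G \<Longrightarrow> f \<in> G \<Longrightarrow> x \<in> V \<Longrightarrow> mulG g f x = g (f x)" by (rule BG_mult[OF G_Bij G_Bij])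
lemma G_one_app: "x \<in> V \<Longrightarrow> oneG x = x" by (rule BG_one)
lemma G_inv1: "g \<in> G \<Longrightarrow> x \<in> V \<Longrightarrow> g (invG g x) = x" by (rule BG_inv1[OF G_Bij])
lemma G_inv2: "g \<in> G \<Longrightarrow> x \<in> V \<Longrightarrow> invG g (g x) = x" by (rule BG_inv2[OF G_Bij])
lemma G_ext: "g \<in> G \<Longrightarrow> f \<in> G \<Longrightarrow> (\<And>x. x \<in> V \<Longrightarrow> g x = f x) \<Longrightarrow> g = f" by (rule Bij_ext[OF G_Bij G_Bij])

lemma H_aut: "h \<in> H \<Longrightarrow> h \<in> graph_aut Vt Et" using Hlift by (auto simp: lifted_group_def is_lift_def)
lemma H_Bij: "h \<in> H \<Longrightarrow> h \<in> Bij Vt" using subgroup.subset[OF subH] by (auto simp: BG_carrier)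
lemma H_in: "h \<in> H \<Longrightarrow> x \<in> Vt \<Longrightarrow> h x \<in> Vt" by (rule Bij_in[OF H_Bij])
lemma H_inj: "h \<in> H \<Longrightarrow> x \<in> Vt \<Longrightarrow> y \<in> Vt \<Longrightarrow> h x = h y \<Longrightarrow> x = y" by (rule Bij_inj[OF H_Bij])
lemma H_E: assumes "h \<in> H" "Et x y" shows "Et (h x) (h y)"
proof -
  have "x \<in> Vt" "y \<in> Vt" using Et_V[OF assms(2)] by auto
  then show ?thesis using H_aut[OF assms(1)] assms(2) unfolding graph_aut_def by blast
qed
lemma H_mul: "g \<in> H \<Longrightarrow> f \<in> H \<Longrightarrow> mulH g f \<in> H" using subgroup.m_closed[OF subH] .
lemma H_inv: "g \<in> H \<Longrightarrow> invH g \<in> H" using subgroup.m_inv_closed[OF subH] .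
lemma H_one: "oneH \<in> H" using subgroup.one_closed[OF subH] .
lemma H_mul_app: "g \<in> H \<Longrightarrow> f \<in> H \<Longrightarrow> x \<in> Vt \<Longrightarrow> mulH g f x = g (f x)" by (rule BG_mult[OF H_Bij H_Bij])

definition L where "L g = (SOME h. h \<in> H \<and> is_lift Vt Et p g h)"

lemma L: assumes "g \<in> G" shows "L g \<in> H" "\<And>x. x \<in> Vt \<Longrightarrow> p (L g x) = g (p x)"
proof -
  have "L g \<in> H \<and> is_lift Vt Et p g (L g)" unfolding L_def using someI_ex lifts[OF assms] by (metis (no_types, lifting))
  then show "L g \<in> H" "\<And>x. x \<in> Vt \<Longrightarrow> p (L g x) = g (p x)" by (auto simp: is_lift_def)
qed

lemma L_uniq: assumes g: "g \<in> G" and h: "h \<in> H" and hl: "\<And>x. x \<in> Vt \<Longrightarrow> p (h x) = g (p x)"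
  shows "h = L g"
proof -
  define h1 where "h1 = L g"
  have h1: "h1 \<in> H" "\<And>x. x \<in> Vt \<Longrightarrow> p (h1 x) = g (p x)" using L[OF g] h1_def by auto
  define k where "k = mulH (invH h1) h"
  have kH: "k \<in> H" unfolding k_def using H_mul H_inv h1 h by blast
  have kapp: "k x = invH h1 (h x)" if "x \<in> Vt" for x
    unfolding k_def using H_mul_app H_inv h1 h that by blast
  have hk: "h1 (k x) = h x" if "x \<in> Vt" for x
    using kapp[OF that] BG_inv1 H_Bij h1(1) H_in h that by metis
  have pk: "p (k x) = p x" if "x \<in> Vt" for x
  proof -
    have "g (p (k x)) = g (p x)" using h1(2)[of "k x"] hk[OF that] hl[OF that] H_in kH that by metis
    then show ?thesis using G_inj g p_V H_in kH that by blast
  qed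
  have "k \<in> covering_transformations Vt Et p" using H_aut kH pk by (simp add: covering_transformations_def)
  then have "k = oneH" using Hct kH by blast
  then have "h x = h1 x" if "x \<in> Vt" for x using hk[OF that] that by (simp add: BG_one)
  then show ?thesis unfolding h1_def using Bij_ext H_Bij h h1(1) h1_def by metis
qed

lemma L_in: "g \<in> G \<Longrightarrow> x \<in> Vt \<Longrightarrow> L g x \<in> Vt" using L H_in by blast

lemma L_mul: assumes "g \<in> G" "f \<in> G" "x \<in> Vt" shows "L (mulG g f) x = L g (L f x)"
proof -
  have "mulH (L g) (L f) = L (mulG g f)"
  proof (rule L_uniq)
    show "mulG g f \<in> G" using G_mul assms by blast
    show "mulH (L g) (L f) \<in> H" using H_mul L assms by blast
    fix y assume y: "y \<in> Vt"
    have "p (mulH (L g) (L f) y) = p (L g (L f y))" using H_mul_app L assms y by metis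
    also have "\<dots> = g (f (p y))" using L assms y L_in by metis
    also have "\<dots> = mulG g f (p y)" using G_mul_app assms p_V y by metis
    finally show "p (mulH (L g) (L f) y) = mulG g f (p y)" .
  qed
  then show ?thesis using H_mul_app L assms by metis
qed

lemma L_one: assumes "x \<in> Vt" shows "L oneG x = x"
proof -
  have "oneH = L oneG" by (rule L_uniq) (auto simp: G_one H_one BG_one p_V)
  then show ?thesis using assms by (metis BG_one)
qed

lemma L_c: assumes g: "g \<in> G" and x: "x \<in> Vt" shows "L g (c x) = c (L g x)"
proof -
  have "p (L g (c x)) = p (L g x)" using L g x c_in c_p by metis
  then have "L g (c x) = L g x \<or> L g (c x) = c (L g x)" using fib L_in g x c_in by metis
  moreover have "L g (c x) \<noteq> L g x" using H_inj L(1)[OF g] c_in x c_ne by metis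
  ultimately show ?thesis by blast
qed

lemma L_fib: assumes "g \<in> G" "x \<in> Vt" "g (p x) = p x" shows "L g x = x \<or> L g x = c x"
  using fib L assms L_in by metis

lemma P1: assumes g: "g \<in> G" and f: "f \<in> G" and x: "x \<in> Vt" and gx: "g (p x) = p x" and fx: "f (p x) = p x"
  shows "L (mulG g f) x = x \<longleftrightarrow> (L g x = x \<longleftrightarrow> L f x = x)"
proof -
  have e: "L (mulG g f) x = L g (L f x)" using L_mul g f x by blast
  have a: "L g x = x \<or> L g x = c x" "L f x = x \<or> L f x = c x" using L_fib assms by auto
  have n: "c x \<noteq> x" using c_ne x by blast
  show ?thesis using a
  proof (elim disjE)
    assume "L g x = c x" "L f x = c x"
    then have "L (mulG g f) x = x" using e L_c g x cc by metis
    then show ?thesis using \<open>L g x = c x\<close> \<open>L f x = c x\<close> n by simp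
  next
    assume "L g x = x" "L f x = c x"
    then have "L (mulG g f) x = c x" using e L_c g x by metis
    then show ?thesis using \<open>L g x = x\<close> \<open>L f x = c x\<close> n by simp
  qed (use e n L_c g x in auto)
qed

lemma Pc: assumes k: "k \<in> G" and x: "x \<in> Vt" and kx: "k (p x) = p x"
  shows "L k (c x) = c x \<longleftrightarrow> L k x = x"
  using L_fib[OF assms] L_c[OF k x] cc[OF x] c_ne[OF x] c_ne[OF c_in[OF x]] by auto

lemma P2: assumes g: "g \<in> G" and e: "Et x y" and gx: "g (p x) = p x" and gy: "g (p y) = p y"
  shows "L g x = x \<longleftrightarrow> L g y = y"
proof -
  have x: "x \<in> Vt" and y: "y \<in> Vt" using e Et_V by auto
  have ee: "Et (L g x) (L g y)" using H_E L g e by blast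
  have ne: "c y \<noteq> y" using c_ne y by blast
  have pcy: "p (c y) = p y" using c_p y by blast
  have a: "L g x = x \<or> L g x = c x" "L g y = y \<or> L g y = c y" using L_fib assms x y by auto
  show ?thesis using a
  proof (elim disjE)
    assume "L g x = x" "L g y = c y"
    then have "Et x (c y)" using ee by simp
    then show ?thesis using p_inj_nb[OF e _ pcy[symmetric]] ne by auto
  next
    assume "L g x = c x" "L g y = y"
    then have "Et (c x) y" using ee by simp
    then have "Et x (c y)" using c_edge cc x by metis
    then show ?thesis using p_inj_nb[OF e _ pcy[symmetric]] ne by auto
  qed (use ne c_ne x in auto)
qed

lemma P3: assumes g: "g \<in> G" and k: "k \<in> G" and k': "k' \<in> G" and x: "x \<in> Vt"
  and kx: "k (p x) = p x" and cm: "mulG k' g = mulG g k"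
  shows "L k' (L g x) = L g x \<longleftrightarrow> L k x = x"
proof -
  have "L k' (L g x) = L g (L k x)" using L_mul g k k' x cm by metis
  moreover have "L k x = x \<or> L k x = c x" using L_fib k x kx by blast
  moreover have "L g (c x) \<noteq> L g x" using L_c g x c_ne L_in by metis
  ultimately show ?thesis by auto
qed

end

context cov begin

lemma nb3: assumes "E v w"
  shows "\<exists>a a'. (\<forall>u. E v u \<longleftrightarrow> u = w \<or> u = a \<or> u = a') \<and> a \<noteq> a' \<and> a \<noteq> w \<and> a' \<noteq> w"
proof -
  have "v \<in> V" using E_V assms by blast
  then have "card {u. E v u} = 3" using cub by (simp add: cubic_def)
  from card3[OF this, of w] assms obtain a a' where eq: "{u. E v u} = {w,a,a'}" and d: "a \<noteq> a'" "a \<noteq> w" "a' \<noteq> w" by auto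
  have "\<forall>u. E v u \<longleftrightarrow> u = w \<or> u = a \<or> u = a'" using eq unfolding set_eq_iff by simp
  then show ?thesis using d by blast
qed

lemma nb_ex: assumes "v \<in> V" shows "\<exists>w. E v w"
proof (rule ccontr)
  assume "\<nexists>w. E v w"
  then have "{u. E v u} = {}" by auto
  moreover have "card {u. E v u} = 3" using cub assms by (simp add: cubic_def)
  ultimately show False by simp
qed

lemma nb_other: assumes "E v w" shows "\<exists>a. E v a \<and> a \<noteq> w"
  using nb3[OF assms] by blast

lemma fix3: assumes g: "g \<in> G" "g v = v" and N: "\<forall>u. E v u \<longleftrightarrow> u = w \<or> u = a \<or> u = a'"
  and d: "a \<noteq> a'" "a \<noteq> w" "a' \<noteq> w" and gw: "g w = w" and ga: "g a = a" shows "g a' = a'"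
proof -
  have ev: "E v w" "E v a" "E v a'" using N by auto
  have V: "w \<in> V" "a \<in> V" "a' \<in> V" using ev E_V by auto
  have "E v (g a')" using G_E[OF g(1) ev(3)] g(2) by simp
  then have "g a' = w \<or> g a' = a \<or> g a' = a'" using N by auto
  moreover have "g a' \<noteq> w" using G_inj[OF g(1) V(3) V(1)] gw d by auto
  moreover have "g a' \<noteq> a" using G_inj[OF g(1) V(3) V(2)] ga d by auto
  ultimately show ?thesis by blast
qed

lemma swap3: assumes g: "g \<in> G" "g v = v" and N: "\<forall>u. E v u \<longleftrightarrow> u = w \<or> u = a \<or> u = a'"
  and d: "a \<noteq> a'" "a \<noteq> w" "a' \<noteq> w" and gw: "g w = w" and ga: "g a \<noteq> a" shows "g a = a' \<and> g a' = a"
proof -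
  have ev: "E v w" "E v a" "E v a'" using N by auto
  have V: "w \<in> V" "a \<in> V" "a' \<in> V" using ev E_V by auto
  have "E v (g a)" using G_E[OF g(1) ev(2)] g(2) by simp
  then have "g a = w \<or> g a = a \<or> g a = a'" using N by auto
  moreover have "g a \<noteq> w" using G_inj[OF g(1) V(2) V(1)] gw d by auto
  ultimately have 1: "g a = a'" using ga by blast
  have "E v (g a')" using G_E[OF g(1) ev(3)] g(2) by simp
  then have "g a' = w \<or> g a' = a \<or> g a' = a'" using N by auto
  moreover have "g a' \<noteq> w" using G_inj[OF g(1) V(3) V(1)] gw d by auto
  moreover have "g a' \<noteq> a'" using G_inj[OF g(1) V(3) V(2)] 1 d by auto
  ultimately show ?thesis using 1 by blast
qed

lemma fixN: assumes g: "g \<in> G" "g v = v" and e: "E v w" "E v a" "w \<noteq> a" and gw: "g w = w" and ga: "g a = a"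
  shows "\<forall>y. E v y \<longrightarrow> g y = y"
proof -
  obtain b b' where N: "\<forall>u. E v u \<longleftrightarrow> u = w \<or> u = b \<or> u = b'" and d: "b \<noteq> b'" "b \<noteq> w" "b' \<noteq> w"
    using nb3[OF e(1)] by blast
  have "a = b \<or> a = b'" using N e by auto
  then show ?thesis
  proof
    assume "a = b"
    then have "g b' = b'" using fix3[OF g N d gw] ga by simp
    then show ?thesis using N gw ga \<open>a = b\<close> by auto
  next
    assume "a = b'"
    have N': "\<forall>u. E v u \<longleftrightarrow> u = w \<or> u = b' \<or> u = b" using N by auto
    then have "g b = b" using fix3[OF g N' _ _ _ gw] ga d \<open>a = b'\<close> by simp
    then show ?thesis using N gw ga \<open>a = b'\<close> by auto
  qed
qed

lemma reg_uniq2: assumes "\<alpha> \<in> s_arcs V E s" "\<beta> \<in> s_arcs V E s" "g \<in> G" "g' \<in> G"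
  "map g \<alpha> = \<beta>" "map g' \<alpha> = \<beta>" shows "g = g'"
proof -
  have "\<exists>!g. g \<in> G \<and> map g \<alpha> = \<beta>" using sreg assms(1,2) unfolding s_regular_def by blast
  then show ?thesis using assms(3-6) by blast
qed

lemma reg_ex: assumes "\<alpha> \<in> s_arcs V E s" "\<beta> \<in> s_arcs V E s" shows "\<exists>g\<in>G. map g \<alpha> = \<beta>"
proof -
  have "\<exists>!g. g \<in> G \<and> map g \<alpha> = \<beta>" using sreg assms(1,2) unfolding s_regular_def by blast
  then show ?thesis by blast
qed

lemma reg_id: assumes "\<alpha> \<in> s_arcs V E s" "g \<in> G" "map g \<alpha> = \<alpha>" shows "g = oneG"
proof -
  have "set \<alpha> \<subseteq> V" using assms(1) by (simp add: s_arcs_def)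
  then have "map oneG \<alpha> = \<alpha>" by (intro map_idI) (auto simp: BG_one)
  then show ?thesis using reg_uniq2[OF assms(1) assms(1) assms(2) G_one assms(3)] by simp
qed

lemma mk4: assumes "E a b" "E b c1" "E c1 d" "E d e" "a \<noteq> c1" "b \<noteq> d" "c1 \<noteq> e"
  shows "[a,b,c1,d,e] \<in> s_arcs V E 4"
proof -
  have "{a,b,c1,d,e} \<subseteq> V" using E_V[OF assms(1)] E_V[OF assms(2)] E_V[OF assms(3)] E_V[OF assms(4)] by auto
  then show ?thesis using assms by (simp add: arc4)
qed

lemma arc_from: assumes "E v u" shows "\<exists>\<alpha>\<in>s_arcs V E s. \<alpha>!0 = v \<and> \<alpha>!1 = u"
proof (cases "s = 1")
  case True
  have "[v,u] \<in> s_arcs V E 1" by (subst arc1) (use E_V[OF assms] assms in auto)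
  then show ?thesis using True by force
next
  case False
  then have s4: "s = 4" using s14 by auto
  obtain b where b: "E u b" "b \<noteq> v" using nb_other[OF E_sym[OF assms]] by blast
  obtain d where d: "E b d" "d \<noteq> u" using nb_other[OF E_sym[OF b(1)]] by blast
  obtain f where f: "E d f" "f \<noteq> b" using nb_other[OF E_sym[OF d(1)]] by blast
  have "[v,u,b,d,f] \<in> s_arcs V E 4" using mk4[OF assms b(1) d(1) f(1)] b d f by auto
  then show ?thesis using s4 by force
qed

lemma arcT: assumes "E v u" "E v' u'" shows "\<exists>h\<in>G. h v = v' \<and> h u = u'"
proof -
  obtain \<alpha> where a: "\<alpha> \<in> s_arcs V E s" "\<alpha>!0 = v" "\<alpha>!1 = u" using arc_from[OF assms(1)] by blast
  obtain \<beta> where b: "\<beta> \<in> s_arcs V E s" "\<beta>!0 = v'" "\<beta>!1 = u'" using arc_from[OF assms(2)] by blast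
  obtain h where h: "h \<in> G" "map h \<alpha> = \<beta>" using reg_ex[OF a(1) b(1)] by blast
  have l: "length \<alpha> = Suc s" using a(1) by (simp add: s_arcs_def)
  have "s \<ge> 1" using s14 by auto
  then have "map h \<alpha> ! 0 = h (\<alpha>!0)" "map h \<alpha> ! 1 = h (\<alpha>!1)" using l by auto
  then show ?thesis using h a b by auto
qed

lemma vtrans: assumes "v \<in> V" "v' \<in> V" shows "\<exists>h\<in>G. h v = v'"
proof -
  obtain w where "E v w" using nb_ex[OF assms(1)] by blast
  obtain w' where "E v' w'" using nb_ex[OF assms(2)] by blast
  show ?thesis using arcT[OF \<open>E v w\<close> \<open>E v' w'\<close>] by blast
qed

definition Kf where "Kf v u k \<longleftrightarrow> k \<in> G \<and> k \<noteq> oneG \<and> (\<forall>y. E v y \<longrightarrow> k y = y) \<and> (\<forall>y. E u y \<longrightarrow> k y = y)"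

lemma Kf_sym: "Kf v u k \<Longrightarrow> Kf u v k" by (auto simp: Kf_def)

lemma K_swap: assumes s4: "s = 4" and e: "E v u" and K: "Kf v u k" and a: "E v a" "a \<noteq> u"
  and z: "E a z" "z \<noteq> v" shows "k z \<noteq> z"
proof
  assume kz: "k z = z"
  obtain y where y: "E u y" "y \<noteq> v" using nb_other[OF E_sym[OF e]] by blast
  have arc: "[y,u,v,a,z] \<in> s_arcs V E s" using mk4[OF E_sym[OF y(1)] E_sym[OF e] a(1) z(1)] y a z s4 by auto
  have "map k [y,u,v,a,z] = [y,u,v,a,z]" using K kz y e E_sym a by (simp add: Kf_def)
  then have "k = oneG" using reg_id arc K by (auto simp: Kf_def)
  then show False using K by (simp add: Kf_def)
qed

lemma K_ex: assumes s4: "s = 4" and e: "E v u" shows "\<exists>k. Kf v u k"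
proof -
  obtain a where a: "E v a" "a \<noteq> u" using nb_other[OF e] by blast
  obtain d where d: "E u d" "d \<noteq> v" using nb_other[OF E_sym[OF e]] by blast
  obtain f f' where N: "\<forall>y. E d y \<longleftrightarrow> y = u \<or> y = f \<or> y = f'" and fd: "f \<noteq> f'" "f \<noteq> u" "f' \<noteq> u"
    using nb3[OF E_sym[OF d(1)]] by blast
  have ef: "E d f" "E d f'" using N by auto
  have al: "[a,v,u,d,f] \<in> s_arcs V E s" using mk4[OF E_sym[OF a(1)] e d(1) ef(1)] a d fd s4 by auto
  have be: "[a,v,u,d,f'] \<in> s_arcs V E s" using mk4[OF E_sym[OF a(1)] e d(1) ef(2)] a d fd s4 by auto
  from reg_ex[OF al be] obtain g where g: "g \<in> G" "map g [a,v,u,d,f] = [a,v,u,d,f']" ..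
  then have ga: "g a = a" "g v = v" "g u = u" "g d = d" "g f = f'" by simp_all
  have fV: "f \<in> V" using E_V ef by blast
  have "g \<noteq> oneG" using ga(5) fd(1) BG_one[OF fV] by auto
  moreover have "\<forall>y. E v y \<longrightarrow> g y = y" using fixN[OF g(1) ga(2) e a(1) a(2)[symmetric] ga(3) ga(1)] .
  moreover have "\<forall>y. E u y \<longrightarrow> g y = y" using fixN[OF g(1) ga(3) E_sym[OF e] d(1) d(2)[symmetric] ga(2) ga(4)] .
  ultimately show ?thesis using g(1) unfolding Kf_def by blast
qed

lemma K_uniq: assumes s4: "s = 4" and e: "E v u" and K: "Kf v u k" and K': "Kf v u k'" shows "k = k'"
proof -
  obtain a where a: "E v a" "a \<noteq> u" using nb_other[OF e] by blast
  obtain d where d: "E u d" "d \<noteq> v" using nb_other[OF E_sym[OF e]] by blast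
  obtain f f' where N: "\<forall>y. E d y \<longleftrightarrow> y = u \<or> y = f \<or> y = f'" and fd: "f \<noteq> f'" "f \<noteq> u" "f' \<noteq> u"
    using nb3[OF E_sym[OF d(1)]] by blast
  have ef: "E d f" "E d f'" using N by auto
  have al: "[a,v,u,d,f] \<in> s_arcs V E s" using mk4[OF E_sym[OF a(1)] e d(1) ef(1)] a d fd s4 by auto
  have be: "[a,v,u,d,f'] \<in> s_arcs V E s" using mk4[OF E_sym[OF a(1)] e d(1) ef(2)] a d fd s4 by auto
  have gen: "map k0 [a,v,u,d,f] = [a,v,u,d,f']" if K0: "Kf v u k0" for k0
  proof -
    have k0G: "k0 \<in> G" using K0 by (simp add: Kf_def)
    have fx: "k0 a = a" "k0 v = v" "k0 u = u" "k0 d = d" using K0 a(1) e E_sym d(1) by (auto simp: Kf_def)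
    have "k0 f \<noteq> f" using K_swap[OF s4 E_sym[OF e] Kf_sym[OF K0] d(1) d(2) ef(1) fd(2)] .
    then have "k0 f = f'" using swap3[OF k0G fx(4) N fd fx(3)] by blast
    then show ?thesis using fx by simp
  qed
  show ?thesis using reg_uniq2[OF al be _ _ gen[OF K] gen[OF K']] K K' by (simp add: Kf_def)
qed

end

context cov begin

lemma K_conj: assumes s4: "s = 4" and e: "E v u" and e': "E v' u'" and h: "h \<in> G" "h v = v'" "h u = u'"
  and K: "Kf v u k" and K': "Kf v' u' k'" shows "mulG k' h = mulG h k"
proof -
  have kG: "k \<in> G" and k'G: "k' \<in> G" using K K' by (auto simp: Kf_def)
  have vV: "v \<in> V" "u \<in> V" using E_V[OF e] by auto
  define k'' where "k'' = mulG h (mulG k (invG h))"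
  have k''G: "k'' \<in> G" unfolding k''_def using G_mul G_inv h(1) kG by blast
  have app: "k'' x = h (k (invG h x))" if "x \<in> V" for x
    unfolding k''_def using G_mul_app[OF h(1) G_mul[OF kG G_inv[OF h(1)]] that]
      G_mul_app[OF kG G_inv[OF h(1)] that] by simp
  have fixgen: "k'' y = y" if w: "w \<in> V" "\<forall>z. E w z \<longrightarrow> k z = z" and ey: "E (h w) y" for w y
  proof -
    have yV: "y \<in> V" using E_V[OF ey] by blast
    define z where "z = invG h y"
    have zV: "z \<in> V" unfolding z_def using G_in[OF G_inv[OF h(1)] yV] .
    have hz: "h z = y" unfolding z_def using G_inv1[OF h(1) yV] .
    have "E w z" using ey hz G_E_iff[OF h(1) w(1) zV] by simp
    then have "k z = z" using w(2) by blast
    then show ?thesis using app[OF yV] hz z_def by simp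
  qed
  have f1: "\<forall>y. E v' y \<longrightarrow> k'' y = y" using fixgen[OF vV(1)] K h(2) by (auto simp: Kf_def)
  have f2: "\<forall>y. E u' y \<longrightarrow> k'' y = y" using fixgen[OF vV(2)] K h(3) by (auto simp: Kf_def)
  have n1: "k'' \<noteq> oneG"
  proof
    assume k1: "k'' = oneG"
    have "k x = oneG x" if x: "x \<in> V" for x
    proof -
      have hx: "h x \<in> V" using G_in[OF h(1) x] .
      have "k'' (h x) = h x" using k1 BG_one[OF hx] by simp
      then have "h (k x) = h x" using app[OF hx] G_inv2[OF h(1) x] by simp
      then show ?thesis using G_inj[OF h(1) G_in[OF kG x] x] BG_one[OF x] by simp
    qed
    then have "k = oneG" using G_ext[OF kG G_one] by blast
    then show False using K by (simp add: Kf_def)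
  qed
  have "Kf v' u' k''" using k''G n1 f1 f2 by (simp add: Kf_def)
  then have kk: "k'' = k'" using K_uniq[OF s4 e' _ K'] by blast
  show ?thesis
  proof (rule G_ext[OF G_mul[OF k'G h(1)] G_mul[OF h(1) kG]])
    fix x assume x: "x \<in> V"
    have "mulG k' h x = k'' (h x)" using G_mul_app[OF k'G h(1) x] kk by simp
    also have "\<dots> = h (k x)" using app[OF G_in[OF h(1) x]] G_inv2[OF h(1) x] by simp
    also have "\<dots> = mulG h k x" using G_mul_app[OF h(1) kG x] by simp
    finally show "mulG k' h x = mulG h k x" .
  qed
qed

lemma Tconst: assumes s4: "s = 4" and x: "x \<in> Vt" and x': "x' \<in> Vt" and e: "E (p x) u" and e': "E (p x') u'"
  and K: "Kf (p x) u k" and K': "Kf (p x') u' k'" shows "L k x = x \<longleftrightarrow> L k' x' = x'"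
proof -
  obtain h where h: "h \<in> G" "h (p x) = p x'" "h u = u'" using arcT[OF e e'] by blast
  have cm: "mulG k' h = mulG h k" using K_conj[OF s4 e e' h K K'] .
  have kG: "k \<in> G" and k'G: "k' \<in> G" using K K' by (auto simp: Kf_def)
  have kx: "k (p x) = p x" using K E_sym[OF e] by (simp add: Kf_def)
  have k'x: "k' (p x') = p x'" using K' E_sym[OF e'] by (simp add: Kf_def)
  have P: "L k' (L h x) = L h x \<longleftrightarrow> L k x = x" using P3[OF h(1) kG k'G x kx cm] .
  have "p (L h x) = p x'" using L(2)[OF h(1) x] h(2) by simp
  then have "L h x = x' \<or> L h x = c x'" using fib[OF x' L_in[OF h(1) x]] by blast
  then show ?thesis
  proof
    assume "L h x = x'" then show ?thesis using P by simp
  next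
    assume "L h x = c x'" then show ?thesis using P Pc[OF k'G x' k'x] by simp
  qed
qed

lemma T: assumes s4: "s = 4" and x: "x \<in> Vt" and e: "E (p x) u" and K: "Kf (p x) u k" shows "L k x = x"
proof -
  define v where "v = p x"
  have ev: "E v u" using e v_def by simp
  obtain a a' where N: "\<forall>y. E v y \<longleftrightarrow> y = u \<or> y = a \<or> y = a'" and d: "a \<noteq> a'" "a \<noteq> u" "a' \<noteq> u"
    using nb3[OF ev] by blast
  have ea: "E v a" "E v a'" using N by auto
  obtain k2 where K2: "Kf v a k2" using K_ex[OF s4 ea(1)] by blast
  have kG: "k \<in> G" and k2G: "k2 \<in> G" using K K2 by (auto simp: Kf_def)
  define m where "m = mulG k k2"
  have mG: "m \<in> G" unfolding m_def using G_mul kG k2G by blast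
  have mapp: "m y = k (k2 y)" if "y \<in> V" for y unfolding m_def using G_mul_app[OF kG k2G that] .
  have Kv: "Kf v u k" using K v_def by simp
  have m1: "\<forall>y. E v y \<longrightarrow> m y = y"
  proof (intro allI impI)
    fix y assume "E v y"
    then show "m y = y" using mapp[of y] E_V K2 Kv by (auto simp: Kf_def)
  qed
  obtain dd dd' where Na': "\<forall>y. E a' y \<longleftrightarrow> y = v \<or> y = dd \<or> y = dd'" and dd: "dd \<noteq> dd'" "dd \<noteq> v" "dd' \<noteq> v"
    using nb3[OF E_sym[OF ea(2)]] by blast
  have edd: "E a' dd" using Na' by auto
  have k2a': "k2 a' = a'" "k2 v = v" using K2 ea(2) E_sym[OF ea(1)] by (auto simp: Kf_def)
  have "k2 dd \<noteq> dd" using K_swap[OF s4 ea(1) K2 ea(2) d(1)[symmetric] edd dd(2)] .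
  then have k2s: "k2 dd = dd' \<and> k2 dd' = dd" using swap3[OF k2G k2a'(1) Na' dd k2a'(2)] by blast
  have ka': "k a' = a'" "k v = v" using Kv ea(2) ev E_sym by (auto simp: Kf_def)
  have "k dd \<noteq> dd" using K_swap[OF s4 ev Kv ea(2) d(3) edd dd(2)] .
  then have ks: "k dd = dd' \<and> k dd' = dd" using swap3[OF kG ka'(1) Na' dd ka'(2)] by blast
  have ddV: "dd \<in> V" "dd' \<in> V" "v \<in> V" using Na' E_V by auto
  have m2: "\<forall>y. E a' y \<longrightarrow> m y = y"
  proof (intro allI impI)
    fix y assume "E a' y"
    then have "y = v \<or> y = dd \<or> y = dd'" using Na' by blast
    then show "m y = y" using mapp ddV k2s ks k2a' ka' by auto
  qed
  obtain b where b: "E u b" "b \<noteq> v" using nb_other[OF E_sym[OF ev]] by blast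
  have bV: "b \<in> V" using E_V b by blast
  have k2b: "k2 b \<noteq> b" using K_swap[OF s4 ea(1) K2 ev d(2)[symmetric] b] .
  have k2u: "k2 u = u" using K2 ev by (simp add: Kf_def)
  have "E u (k2 b)" using G_E[OF k2G b(1)] k2u by simp
  then have "k (k2 b) = k2 b" using Kv by (simp add: Kf_def)
  then have "m b \<noteq> b" using mapp[OF bV] k2b by simp
  then have "m \<noteq> oneG" using BG_one[OF bV] by auto
  then have Km: "Kf v a' m" using mG m1 m2 by (simp add: Kf_def)
  have xv: "k (p x) = p x" "k2 (p x) = p x" using ka' k2a' v_def by auto
  have e1: "L m x = x \<longleftrightarrow> (L k x = x \<longleftrightarrow> L k2 x = x)" unfolding m_def using P1[OF kG k2G x xv] .
  have e2: "L m x = x \<longleftrightarrow> L k x = x" using Tconst[OF s4 x x _ e Km[unfolded v_def] K] ea v_def by simp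
  have e3: "L k2 x = x \<longleftrightarrow> L k x = x" using Tconst[OF s4 x x _ e K2[unfolded v_def] K] ea v_def by simp
  show ?thesis using e1 e2 e3 by blast
qed

lemma step3a: assumes s4: "s = 4" and x: "x \<in> Vt" and e: "E (p x) w" and m: "m \<in> G"
  and f1: "\<forall>y. E (p x) y \<longrightarrow> m y = y" and f2: "\<forall>y. E w y \<longrightarrow> m y = y" shows "L m x = x"
proof (cases "m = oneG")
  case True then show ?thesis using L_one x by simp
next
  case False
  then have "Kf (p x) w m" using m f1 f2 by (simp add: Kf_def)
  then show ?thesis using T[OF s4 x e] by blast
qed

lemma step3: assumes s4: "s = 4" and x: "x \<in> Vt" and g: "g \<in> G" and gv: "g (p x) = p x"
  and f1: "\<forall>y. E (p x) y \<longrightarrow> g y = y" shows "L g x = x"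
proof -
  define v where "v = p x"
  obtain w where ew: "E v w" using nb_ex p_V x v_def by blast
  obtain b b' where Nw: "\<forall>y. E w y \<longleftrightarrow> y = v \<or> y = b \<or> y = b'" and db: "b \<noteq> b'" "b \<noteq> v" "b' \<noteq> v"
    using nb3[OF E_sym[OF ew]] by blast
  have gw: "g w = w" "g v = v" using f1 ew gv v_def by auto
  have eb: "E w b" "E w b'" using Nw by auto
  show ?thesis
  proof (cases "g b = b")
    case True
    then have "g b' = b'" using fix3[OF g gw(1) Nw db gw(2)] by blast
    then have "\<forall>y. E w y \<longrightarrow> g y = y" using Nw True gw by auto
    then show ?thesis using step3a[OF s4 x _ g f1] ew v_def by blast
  next
    case False
    then have gs: "g b = b' \<and> g b' = b" using swap3[OF g gw(1) Nw db gw(2)] by blast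
    obtain a where a: "E v a" "a \<noteq> w" using nb_other[OF ew] by blast
    obtain k2 where K2: "Kf v a k2" using K_ex[OF s4 a(1)] by blast
    have k2G: "k2 \<in> G" using K2 by (simp add: Kf_def)
    have k2b: "k2 b \<noteq> b" using K_swap[OF s4 a(1) K2 ew a(2)[symmetric] eb(1) db(2)] .
    have k2w: "k2 w = w" "k2 v = v" using K2 ew E_sym[OF a(1)] by (auto simp: Kf_def)
    have k2s: "k2 b = b' \<and> k2 b' = b" using swap3[OF k2G k2w(1) Nw db k2w(2) k2b] .
    define m where "m = mulG g k2"
    have mG: "m \<in> G" unfolding m_def using G_mul g k2G by blast
    have mapp: "m y = g (k2 y)" if "y \<in> V" for y unfolding m_def using G_mul_app[OF g k2G that] .
    have m1: "\<forall>y. E (p x) y \<longrightarrow> m y = y"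
    proof (intro allI impI)
      fix y assume "E (p x) y"
      then show "m y = y" using mapp[of y] E_V K2 f1 v_def by (auto simp: Kf_def)
    qed
    have V3: "b \<in> V" "w \<in> V" "v \<in> V" using E_V eb ew by auto
    have mb: "m b = b" "m w = w" "m v = v" using mapp V3 k2s gs k2w gw by auto
    have m2: "\<forall>y. E w y \<longrightarrow> m y = y" using fixN[OF mG mb(2) E_sym[OF ew] eb(1) db(2)[symmetric] mb(3) mb(1)] .
    have Lm: "L m x = x" using step3a[OF s4 x _ mG m1 m2] ew v_def by blast
    have Lk: "L k2 x = x" using T[OF s4 x _ K2[unfolded v_def]] a v_def by blast
    have "L m x = x \<longleftrightarrow> (L g x = x \<longleftrightarrow> L k2 x = x)" unfolding m_def using P1[OF g k2G x gv] k2w v_def by simp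
    then show ?thesis using Lm Lk by blast
  qed
qed

lemma step4: assumes s4: "s = 4" and x: "x \<in> Vt" and ew: "E (p x) w" and g: "g \<in> G" and gv: "g (p x) = p x"
  and gw: "g w = w" shows "L g x = x"
proof -
  define v where "v = p x"
  have ev: "E v w" using ew v_def by simp
  obtain a a' where N: "\<forall>y. E v y \<longleftrightarrow> y = w \<or> y = a \<or> y = a'" and d: "a \<noteq> a'" "a \<noteq> w" "a' \<noteq> w"
    using nb3[OF ev] by blast
  have ea: "E v a" "E v a'" using N by auto
  have gv': "g v = v" using gv v_def by simp
  show ?thesis
  proof (cases "g a = a")
    case True
    then have "\<forall>y. E v y \<longrightarrow> g y = y" using fixN[OF g gv' ev ea(1) d(2)[symmetric] gw] by blast
    then show ?thesis using step3[OF s4 x g gv] v_def by simp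
  next
    case False
    then have gs: "g a = a' \<and> g a' = a" using swap3[OF g gv' N d gw] by blast
    obtain b where b: "E w b" "b \<noteq> v" using nb_other[OF E_sym[OF ev]] by blast
    obtain k where K: "Kf w b k" using K_ex[OF s4 b(1)] by blast
    have kG: "k \<in> G" using K by (simp add: Kf_def)
    have ka: "k a \<noteq> a" using K_swap[OF s4 b(1) K E_sym[OF ev] b(2)[symmetric] ea(1) d(2)] .
    have kv: "k v = v" "k w = w" using K E_sym[OF ev] E_sym[OF b(1)] by (auto simp: Kf_def)
    have ks: "k a = a' \<and> k a' = a" using swap3[OF kG kv(1) N d kv(2) ka] .
    define m where "m = mulG g k"
    have mG: "m \<in> G" unfolding m_def using G_mul g kG by blast
    have mapp: "m y = g (k y)" if "y \<in> V" for y unfolding m_def using G_mul_app[OF g kG that] .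
    have V3: "a \<in> V" "w \<in> V" "v \<in> V" using E_V ea ev by auto
    have mf: "m a = a" "m w = w" "m v = v" using mapp V3 ks gs kv gw gv' by auto
    have m1: "\<forall>y. E v y \<longrightarrow> m y = y" using fixN[OF mG mf(3) ev ea(1) d(2)[symmetric] mf(2) mf(1)] .
    have Lm: "L m x = x" using step3[OF s4 x mG] m1 mf v_def by simp
    obtain y where y: "Et x y" "p y = w" using p_lift_nb[OF x ew] by blast
    have yV: "y \<in> Vt" using Et_V[OF y(1)] by blast
    have Ky: "L k y = y" using T[OF s4 yV _ K[folded y(2)]] b y(2) by simp
    have "L k x = x \<longleftrightarrow> L k y = y" using P2[OF kG y(1)] kv y(2) v_def by simp
    then have Lk: "L k x = x" using Ky by simp
    have "L m x = x \<longleftrightarrow> (L g x = x \<longleftrightarrow> L k x = x)" unfolding m_def using P1[OF g kG x gv] kv v_def by simp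
    then show ?thesis using Lm Lk by blast
  qed
qed

lemma step5: assumes s4: "s = 4" and x: "x \<in> Vt" and g: "g \<in> G" and gv: "g (p x) = p x" shows "L g x = x"
proof -
  define v where "v = p x"
  obtain w where ew: "E v w" using nb_ex p_V x v_def by blast
  obtain a a' where N: "\<forall>y. E v y \<longleftrightarrow> y = w \<or> y = a \<or> y = a'" and d: "a \<noteq> a'" "a \<noteq> w" "a' \<noteq> w"
    using nb3[OF ew] by blast
  have ea: "E v a" "E v a'" using N by auto
  obtain e where e: "E a e" "e \<noteq> v" using nb_other[OF E_sym[OF ea(1)]] by blast
  obtain f where f: "E e f" "f \<noteq> a" using nb_other[OF E_sym[OF e(1)]] by blast
  obtain e' where e': "E a' e'" "e' \<noteq> v" using nb_other[OF E_sym[OF ea(2)]] by blast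
  obtain f' where f': "E e' f'" "f' \<noteq> a'" using nb_other[OF E_sym[OF e'(1)]] by blast
  have al: "[w,v,a,e,f] \<in> s_arcs V E s" using mk4[OF E_sym[OF ew] ea(1) e(1) f(1)] d e f s4 by auto
  have be: "[a,v,a',e',f'] \<in> s_arcs V E s" using mk4[OF E_sym[OF ea(1)] ea(2) e'(1) f'(1)] d e' f' s4 by auto
  from reg_ex[OF al be] obtain t where t: "t \<in> G" "map t [w,v,a,e,f] = [a,v,a',e',f']" ..
  then have tt: "t w = a" "t v = v" "t a = a'" by simp_all
  have V3: "a \<in> V" "w \<in> V" "v \<in> V" "a' \<in> V" using E_V ea ew by auto
  have "E v (t a')" using G_E[OF t(1) ea(2)] tt(2) by simp
  then have "t a' = w \<or> t a' = a \<or> t a' = a'" using N by auto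
  moreover have "t a' \<noteq> a" using G_inj[OF t(1) V3(4) V3(2)] tt d by auto
  moreover have "t a' \<noteq> a'" using G_inj[OF t(1) V3(4) V3(1)] tt d by auto
  ultimately have ta': "t a' = w" by blast
  have tv: "t (p x) = p x" using tt v_def by simp
  have t2G: "mulG t t \<in> G" using G_mul t(1) by blast
  have t2v: "mulG t t (p x) = p x" using G_mul_app[OF t(1) t(1) V3(3)] tt v_def by simp
  have t3G: "mulG t (mulG t t) \<in> G" using G_mul t(1) t2G by blast
  have t3app: "mulG t (mulG t t) y = t (t (t y))" if "y \<in> V" for y
    using G_mul_app[OF t(1) t2G that] G_mul_app[OF t(1) t(1) that] by simp
  have "L (mulG t (mulG t t)) x = x" using step4[OF s4 x _ t3G] ew v_def t3app V3 tt ta' by simp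
  moreover have "L (mulG t (mulG t t)) x = x \<longleftrightarrow> (L t x = x \<longleftrightarrow> L (mulG t t) x = x)" using P1[OF t(1) t2G x tv t2v] .
  moreover have "L (mulG t t) x = x \<longleftrightarrow> (L t x = x \<longleftrightarrow> L t x = x)" using P1[OF t(1) t(1) x tv tv] .
  ultimately have Lt: "L t x = x" by blast
  have gV: "g v = v" using gv v_def by simp
  have "E v (g w)" using G_E[OF g ew] gV by simp
  then have "g w = w \<or> g w = a \<or> g w = a'" using N by auto
  then show ?thesis
  proof (elim disjE)
    assume "g w = w" then show ?thesis using step4[OF s4 x _ g gv] ew v_def by simp
  next
    assume gw: "g w = a"
    have tgG: "mulG t g \<in> G" using G_mul t(1) g by blast
    have tgv: "mulG t g (p x) = p x" using G_mul_app[OF t(1) g V3(3)] tt gV v_def by simp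
    have mG: "mulG t (mulG t g) \<in> G" using G_mul t(1) tgG by blast
    have mw: "mulG t (mulG t g) w = w" using G_mul_app[OF t(1) tgG V3(2)] G_mul_app[OF t(1) g V3(2)] gw tt ta' by simp
    have mv: "mulG t (mulG t g) (p x) = p x" using G_mul_app[OF t(1) tgG V3(3)] tgv tt v_def by simp
    have "L (mulG t (mulG t g)) x = x" using step4[OF s4 x _ mG mv mw] ew v_def by simp
    moreover have "L (mulG t (mulG t g)) x = x \<longleftrightarrow> (L t x = x \<longleftrightarrow> L (mulG t g) x = x)" using P1[OF t(1) tgG x tv tgv] .
    moreover have "L (mulG t g) x = x \<longleftrightarrow> (L t x = x \<longleftrightarrow> L g x = x)" using P1[OF t(1) g x tv gv] .
    ultimately show ?thesis using Lt by blast
  next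
    assume gw: "g w = a'"
    have tgG: "mulG t g \<in> G" using G_mul t(1) g by blast
    have tgv: "mulG t g (p x) = p x" using G_mul_app[OF t(1) g V3(3)] tt gV v_def by simp
    have mw: "mulG t g w = w" using G_mul_app[OF t(1) g V3(2)] gw ta' by simp
    have "L (mulG t g) x = x" using step4[OF s4 x _ tgG tgv mw] ew v_def by simp
    moreover have "L (mulG t g) x = x \<longleftrightarrow> (L t x = x \<longleftrightarrow> L g x = x)" using P1[OF t(1) g x tv gv] .
    ultimately show ?thesis using Lt by blast
  qed
qed

lemma NS1: assumes s1: "s = 1" and x: "x \<in> Vt" and g: "g \<in> G" and gv: "g (p x) = p x" shows "L g x = x"
proof -
  define v where "v = p x"
  have vV: "v \<in> V" using p_V x v_def by simp
  obtain w where ew: "E v w" using nb_ex vV by blast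
  obtain a a' where N: "\<forall>y. E v y \<longleftrightarrow> y = w \<or> y = a \<or> y = a'" and d: "a \<noteq> a'" "a \<noteq> w" "a' \<noteq> w"
    using nb3[OF ew] by blast
  have ea: "E v a" "E v a'" using N by auto
  have fix1: "g' = oneG" if g': "g' \<in> G" "g' v = v" "E v y" "g' y = y" for g' y
  proof -
    have "[v,y] \<in> s_arcs V E 1" by (subst arc1) (use E_V[OF g'(3)] g'(3) in auto)
    then show ?thesis using reg_id[of "[v,y]" g'] s1 g' by simp
  qed
  have V3: "a \<in> V" "w \<in> V" "a' \<in> V" using E_V ea ew by auto
  have gV: "g v = v" using gv v_def by simp
  have m: "g w = w \<or> g w = a \<or> g w = a'" "g a = w \<or> g a = a \<or> g a = a'" "g a' = w \<or> g a' = a \<or> g a' = a'"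
    using G_E[OF g ew] G_E[OF g ea(1)] G_E[OF g ea(2)] gV N by auto
  have i: "g w \<noteq> g a" "g w \<noteq> g a'" "g a \<noteq> g a'" using G_inj[OF g] V3 d by metis+
  show ?thesis
  proof (cases "g w = w \<or> g a = a \<or> g a' = a'")
    case True
    then have "g = oneG" using fix1[OF g gV] ew ea by blast
    then show ?thesis using L_one x by simp
  next
    case False
    then have g3: "g (g (g w)) = w" using m i by auto
    have g2G: "mulG g g \<in> G" using G_mul g by blast
    have g2v: "mulG g g (p x) = p x" using G_mul_app[OF g g vV] gV v_def by simp
    have g3G: "mulG g (mulG g g) \<in> G" using G_mul g g2G by blast
    have g3app: "mulG g (mulG g g) y = g (g (g y))" if "y \<in> V" for y
      using G_mul_app[OF g g2G that] G_mul_app[OF g g that] by simp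
    have "mulG g (mulG g g) = oneG" using fix1[OF g3G _ ew] g3app vV V3 gV g3 by simp
    then have "L (mulG g (mulG g g)) x = x" using L_one x by simp
    moreover have "L (mulG g (mulG g g)) x = x \<longleftrightarrow> (L g x = x \<longleftrightarrow> L (mulG g g) x = x)" using P1[OF g g2G x gv g2v] .
    moreover have "L (mulG g g) x = x \<longleftrightarrow> (L g x = x \<longleftrightarrow> L g x = x)" using P1[OF g g x gv gv] .
    ultimately show ?thesis by blast
  qed
qed

lemma NS: assumes x: "x \<in> Vt" and g: "g \<in> G" and gv: "g (p x) = p x" shows "L g x = x"
  using s14 NS1[OF _ x g gv] step5[OF _ x g gv] by auto

end

context cov begin

lemma G_linv: "g \<in> G \<Longrightarrow> mulG (invG g) g = oneG"
  using group.l_inv[OF group_BijGroup] G_Bij BG_carrier by metis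
lemma G_rinv: "g \<in> G \<Longrightarrow> mulG g (invG g) = oneG"
  using group.r_inv[OF group_BijGroup] G_Bij BG_carrier by metis

lemma L_inv1: assumes "g \<in> G" "y \<in> Vt" shows "L (invG g) (L g y) = y"
  using L_mul[OF G_inv[OF assms(1)] assms(1) assms(2)] G_linv[OF assms(1)] L_one[OF assms(2)] by simp
lemma L_inv2: assumes "g \<in> G" "y \<in> Vt" shows "L g (L (invG g) y) = y"
  using L_mul[OF assms(1) G_inv[OF assms(1)] assms(2)] G_rinv[OF assms(1)] L_one[OF assms(2)] by simp

lemma final: "is_canonical_double_cover V E Vt Et p"
proof -
  obtain x0 where x0: "x0 \<in> Vt" using conT by (auto simp: graph_connected_def)
  define Orb where "Orb = {y. \<exists>g\<in>G. y = L g x0}"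
  have Orb_sub: "y \<in> Vt" if "y \<in> Orb" for y using L_in x0 Orb_def that by auto
  have O_x0: "x0 \<in> Orb" using L_one[OF x0] G_one Orb_def by force
  have O_closed: "L g y \<in> Orb" if yO: "y \<in> Orb" and gG: "g \<in> G" for y g
  proof -
    obtain g' where g': "g' \<in> G" "y = L g' x0" using yO Orb_def by blast
    have "L g y = L (mulG g g') x0" using L_mul[OF gG g'(1) x0] g' by simp
    then show ?thesis using G_mul[OF gG g'(1)] Orb_def by blast
  qed
  have O_inv: "y \<in> Orb" if "y \<in> Vt" "g \<in> G" "L g y \<in> Orb" for y g
    using O_closed[OF that(3) G_inv[OF that(2)]] L_inv1[OF that(2,1)] by simp
  have O_cover: "y \<in> Orb \<or> c y \<in> Orb" if y: "y \<in> Vt" for y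
  proof -
    obtain h where h: "h \<in> G" "h (p x0) = p y" using vtrans[OF p_V[OF x0] p_V[OF y]] by blast
    have "p (L h x0) = p y" using L(2)[OF h(1) x0] h(2) by simp
    then have "L h x0 = y \<or> L h x0 = c y" using fib[OF y L_in[OF h(1) x0]] by blast
    moreover have "L h x0 \<in> Orb" using h(1) unfolding Orb_def by blast
    ultimately show ?thesis by auto
  qed
  have O_excl: "c y \<notin> Orb" if y: "y \<in> Orb" for y
  proof
    assume cy: "c y \<in> Orb"
    obtain g where g: "g \<in> G" "y = L g x0" using y Orb_def by blast
    obtain g' where g': "g' \<in> G" "c y = L g' x0" using cy Orb_def by blast
    define m where "m = mulG (invG g) g'"
    have mG: "m \<in> G" unfolding m_def using G_mul G_inv g g' by blast
    have "L m x0 = L (invG g) (L g' x0)" unfolding m_def using L_mul[OF G_inv[OF g(1)] g'(1) x0] .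
    also have "\<dots> = L (invG g) (c (L g x0))" using g g' by simp
    also have "\<dots> = c (L (invG g) (L g x0))" using L_c[OF G_inv[OF g(1)] L_in[OF g(1) x0]] .
    also have "\<dots> = c x0" using L_inv1[OF g(1) x0] by simp
    finally have Lm: "L m x0 = c x0" .
    have "m (p x0) = p x0" using L(2)[OF mG x0] Lm c_p[OF x0] by simp
    then have "L m x0 = x0" using NS[OF x0 mG] by blast
    then show False using Lm c_ne[OF x0] by simp
  qed
  have nb0: "y \<notin> Orb" if e: "Et x0 y" for y
  proof
    assume yO: "y \<in> Orb"
    have C1: "y' \<in> Orb" if e': "Et x0 y'" for y'
    proof -
      obtain g where g: "g \<in> G" "g (p x0) = p x0" "g (p y) = p y'" using arcT[OF p_edge[OF e] p_edge[OF e']] by blast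
      have "L g x0 = x0" using NS[OF x0 g(1) g(2)] .
      then have "Et x0 (L g y)" using H_E[OF L(1)[OF g(1)] e] by simp
      moreover have "p (L g y) = p y'" using L(2)[OF g(1)] Et_V[OF e] g(3) by simp
      ultimately have "L g y = y'" using p_inj_nb e' by blast
      then show ?thesis using O_closed[OF yO g(1)] by simp
    qed
    have C2: "z' \<in> Orb" if z: "z \<in> Orb" "Et z z'" for z z'
    proof -
      obtain g where g: "g \<in> G" "z = L g x0" using z Orb_def by blast
      have z'V: "z' \<in> Vt" using Et_V[OF z(2)] by blast
      have "Et (L (invG g) z) (L (invG g) z')" using H_E[OF L(1)[OF G_inv[OF g(1)]] z(2)] .
      moreover have "L (invG g) z = x0" using L_inv1[OF g(1) x0] g(2) by simp
      ultimately have "L (invG g) z' \<in> Orb" using C1 by simp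
      then have "L g (L (invG g) z') \<in> Orb" using O_closed g(1) by blast
      then show ?thesis using L_inv2[OF g(1) z'V] by simp
    qed
    have R: "z \<in> Orb" if "Et\<^sup>*\<^sup>* x0 z" for z
      using that by (induction rule: rtranclp_induct) (use O_x0 C2 in auto)
    have "Et\<^sup>*\<^sup>* x0 (c x0)" using conT c_in[OF x0] x0 by (auto simp: graph_connected_def)
    then have "c x0 \<in> Orb" using R by blast
    then show False using O_excl O_x0 by blast
  qed
  have eO: "z \<notin> Orb" if e: "Et y z" "y \<in> Orb" for y z
  proof
    assume zO: "z \<in> Orb"
    obtain g where g: "g \<in> G" "y = L g x0" using e(2) Orb_def by blast
    have "Et (L (invG g) y) (L (invG g) z)" using H_E[OF L(1)[OF G_inv[OF g(1)]] e(1)] .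
    moreover have "L (invG g) y = x0" using L_inv1[OF g(1) x0] g(2) by simp
    moreover have "L (invG g) z \<in> Orb" using O_closed[OF zO G_inv[OF g(1)]] .
    ultimately show False using nb0 by auto
  qed
  have enO: "z \<in> Orb" if e: "Et y z" "y \<notin> Orb" for y z
  proof (rule ccontr)
    assume zO: "z \<notin> Orb"
    have yz: "y \<in> Vt" "z \<in> Vt" using Et_V[OF e(1)] by auto
    have "c y \<in> Orb" "c z \<in> Orb" using O_cover yz e(2) zO by auto
    moreover have "Et (c y) (c z)" using c_edge[OF e(1)] .
    ultimately show False using eO by blast
  qed
  have cO: "c y \<in> Orb \<longleftrightarrow> y \<notin> Orb" if "y \<in> Vt" for y using O_cover[OF that] O_excl by blast
  define \<phi> where "\<phi> x = (p x, x \<in> Orb)" for x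
  have inj: "inj_on \<phi> Vt"
  proof (rule inj_onI)
    fix x y assume xy: "x \<in> Vt" "y \<in> Vt" "\<phi> x = \<phi> y"
    then have "p y = p x" "(y \<in> Orb) = (x \<in> Orb)" by (auto simp: \<phi>_def)
    then show "x = y" using fib[OF xy(1) xy(2)] cO[OF xy(1)] by auto
  qed
  have img: "\<phi> ` Vt = V \<times> (UNIV :: bool set)"
  proof
    show "\<phi> ` Vt \<subseteq> V \<times> UNIV" using p_V by (auto simp: \<phi>_def)
  next
    show "V \<times> UNIV \<subseteq> \<phi> ` Vt"
    proof
      fix q :: "'a \<times> bool" assume "q \<in> V \<times> UNIV"
      then obtain v b where q: "q = (v, b)" "v \<in> V" by auto
      obtain x where x: "x \<in> Vt" "p x = v" using p_surj[OF q(2)] by blast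
      show "q \<in> \<phi> ` Vt"
      proof (cases "(x \<in> Orb) = b")
        case True then show ?thesis using x q by (auto simp: \<phi>_def)
      next
        case False
        then have "\<phi> (c x) = q" using q x c_p cO by (auto simp: \<phi>_def)
        then show ?thesis using c_in[OF x(1)] by blast
      qed
    qed
  qed
  have edges: "Et x y \<longleftrightarrow> cdc_edge E (\<phi> x) (\<phi> y)" if xy: "x \<in> Vt" "y \<in> Vt" for x y
  proof
    assume e: "Et x y"
    have "(y \<in> Orb) = (\<not> (x \<in> Orb))" using eO[OF e] enO[OF e] by blast
    then show "cdc_edge E (\<phi> x) (\<phi> y)" using p_edge[OF e] by (simp add: cdc_edge_def \<phi>_def)
  next
    assume "cdc_edge E (\<phi> x) (\<phi> y)"
    then have e: "E (p x) (p y)" and col: "(y \<in> Orb) = (\<not> (x \<in> Orb))" by (auto simp: cdc_edge_def \<phi>_def)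
    obtain y' where y': "Et x y'" "p y' = p y" using p_lift_nb[OF xy(1) e] by blast
    have y'V: "y' \<in> Vt" using Et_V[OF y'(1)] by blast
    have col': "(y' \<in> Orb) = (\<not> (x \<in> Orb))" using eO[OF y'(1)] enO[OF y'(1)] by blast
    have "y' = y \<or> y' = c y" using fib[OF xy(2) y'V y'(2)] .
    moreover have "y' \<noteq> c y" using col col' cO[OF xy(2)] by auto
    ultimately show "Et x y" using y' by auto
  qed
  show ?thesis unfolding is_canonical_double_cover_def
    using inj img edges by (intro exI[of _ \<phi>]) (auto simp: bij_betw_def \<phi>_def)
qed

end


theorem theorem4p1:
  fixes V :: "'a set" and E :: "'a \<Rightarrow> 'a \<Rightarrow> bool" and G :: "('a \<Rightarrow> 'a) set"
    and s :: nat
    and Vt :: "'b set" and Et :: "'b \<Rightarrow> 'b \<Rightarrow> bool" and p :: "'b \<Rightarrow> 'a"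
  assumes "simple_graph V E" and "graph_connected V E" and "cubic V E"
    and "subgroup G (BijGroup V)" and "G \<subseteq> graph_aut V E"
    and "s \<in> {1, 4}" and "s_regular V E G s"
    and "simple_graph Vt Et" and "graph_connected Vt Et"
    and "G_split_two_cover V E G Vt Et p"
  shows "is_canonical_double_cover V E Vt Et p"
proof -
  define CT where "CT = covering_transformations Vt Et p"
  from assms(10) have tc: "two_cover Vt Et V E p" and lf: "\<forall>g\<in>G. \<exists>gt. is_lift Vt Et p g gt"
    and "\<exists>H. subgroup H (BijGroup Vt) \<and> H \<subseteq> lifted_group Vt Et p G
          \<and> H \<inter> CT = {\<one>\<^bsub>BijGroup Vt\<^esub>}
          \<and> H <#>\<^bsub>BijGroup Vt\<^esub> CT = lifted_group Vt Et p G"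
    unfolding G_split_two_cover_def CT_def by blast+
  then obtain H where H: "subgroup H (BijGroup Vt)" "H \<subseteq> lifted_group Vt Et p G"
    "H \<inter> CT = {\<one>\<^bsub>BijGroup Vt\<^esub>}" "H <#>\<^bsub>BijGroup Vt\<^esub> CT = lifted_group Vt Et p G" by blast
  from tc have cov: "covering_projection Vt Et V E p"
    and ru: "\<forall>x\<in>Vt. \<forall>y\<in>Vt. p x = p y \<longrightarrow> (\<exists>!c. c \<in> CT \<and> c x = y)"
    and card: "card CT = 2"
    unfolding two_cover_def regular_covering_def CT_def by blast+
  define idt where "idt = (\<one>\<^bsub>BijGroup Vt\<^esub> :: 'b \<Rightarrow> 'b)"
  have idt_app: "idt x = x" if "x \<in> Vt" for x using that by (simp add: idt_def BG_one)
  have idt_Bij: "idt \<in> Bij Vt" unfolding idt_def BijGroup_def using id_Bij by simp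
  have idCT: "idt \<in> CT" unfolding CT_def covering_transformations_def graph_aut_def
    using idt_Bij idt_app by simp
  obtain a b where ab: "CT = {a,b}" "a \<noteq> b" using card by (auto simp: card_2_iff)
  obtain cc where cc: "cc \<in> CT" "cc \<noteq> idt" using ab by blast
  have CTeq: "CT = {idt, cc}" using ab idCT cc by auto
  have ccaut: "cc \<in> graph_aut Vt Et" and ccp: "\<And>x. x \<in> Vt \<Longrightarrow> p (cc x) = p x"
    using cc(1) unfolding CT_def covering_transformations_def by auto
  have ccB: "cc \<in> Bij Vt" using ccaut by (simp add: graph_aut_def)
  have sgT: "\<And>x y. Et x y \<Longrightarrow> x \<in> Vt \<and> y \<in> Vt" using assms(8) by (simp add: simple_graph_def)
  have c_ne: "cc x \<noteq> x" if x: "x \<in> Vt" for x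
  proof
    assume "cc x = x"
    moreover have "\<exists>!c. c \<in> CT \<and> c x = x" using ru x by blast
    ultimately have "cc = idt" using cc(1) idCT idt_app[OF x] by blast
    then show False using cc(2) by simp
  qed
  have fib: "y = x \<or> y = cc x" if xy: "x \<in> Vt" "y \<in> Vt" "p y = p x" for x y
  proof -
    have "\<exists>!c. c \<in> CT \<and> c x = y" using ru xy by simp
    then obtain c' where "c' \<in> CT" "c' x = y" by blast
    then show ?thesis using CTeq idt_app[OF xy(1)] by auto
  qed
  have c_edge: "Et (cc x) (cc y)" if "Et x y" for x y
    using ccaut sgT[OF that] that unfolding graph_aut_def by blast
  have lifts: "\<exists>h\<in>H. is_lift Vt Et p g h" if g: "g \<in> G" for g
  proof -
    obtain gt where gt: "is_lift Vt Et p g gt" using lf g by blast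
    then have "gt \<in> lifted_group Vt Et p G" using g unfolding lifted_group_def by blast
    then have "gt \<in> H <#>\<^bsub>BijGroup Vt\<^esub> CT" using H(4) by simp
    then obtain h k where hk: "h \<in> H" "k \<in> CT" "gt = h \<otimes>\<^bsub>BijGroup Vt\<^esub> k"
      unfolding set_mult_def by blast
    have hB: "h \<in> Bij Vt" using subgroup.subset[OF H(1)] hk(1) by (auto simp: BG_carrier)
    have kB: "k \<in> Bij Vt" and kp: "\<And>x. x \<in> Vt \<Longrightarrow> p (k x) = p x"
      using hk(2) unfolding CT_def covering_transformations_def graph_aut_def by auto
    have haut: "h \<in> graph_aut Vt Et" using H(2) hk(1) by (auto simp: lifted_group_def is_lift_def)
    have "p (h y) = g (p y)" if y: "y \<in> Vt" for y
    proof -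
      obtain z where z: "z \<in> Vt" "k z = y" using Bij_surj[OF kB y] by blast
      have "gt z = h y" using hk(3) BG_mult[OF hB kB z(1)] z(2) by simp
      moreover have "p (gt z) = g (p z)" using gt z(1) by (simp add: is_lift_def)
      ultimately show ?thesis using kp[OF z(1)] z(2) by simp
    qed
    then show ?thesis using hk(1) haut unfolding is_lift_def by blast
  qed
  have c_in: "cc x \<in> Vt" if "x \<in> Vt" for x using Bij_in[OF ccB that] .
  have Hct: "H \<inter> covering_transformations Vt Et p = {\<one>\<^bsub>BijGroup Vt\<^esub>}" using H(3) CT_def by simp
  interpret cov V E G s Vt Et p H cc
    by (rule cov.intro[OF assms(1) assms(3) assms(4) assms(5) assms(6) assms(7) assms(8) assms(9) cov
        c_in ccp c_ne fib c_edge H(1) H(2) Hct lifts])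
  show ?thesis by (rule final)
qed


end
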